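(* Let $(G,r,k,c,\pi)$ be an instance of $k$-PCST with optimal value $\mathrm{OPT}$, and run the algorithm $\mathcal{A}$ described below on it. If $\mathcal{A}$ terminates at Step 3, then its output $F_{\mathrm{OUT}}=(V_{\mathrm{OUT}},E_{\mathrm{OUT}})$ is a feasible solution of the $k$-PCST instance and satisfies \[ \sum_{e\in E_{\mathrm{OUT}}}c(e)+\sum_{v\notin V_{\mathrm{OUT}}}\pi(v)\le 4\,\mathrm{OPT}. \]
   Context: An instance of $k$-PCST consists of an undirected connected graph $G=(V,E)$, a root $r\in V$, an integer $k$, a nonnegative edge cost $c:E\to\mathbb{R}_+$ and a nonnegative penalty $\pi:V\to\mathbb{R}_+$. A feasible solution is a subtree $F=(V_F,E_F)$ of $G$ with $r\in V_F$ and $|V_F|\ge k$, of cost $\sum_{e\in E_F}c(e)+\sum_{v\in V\setminus V_F}\pi(v)$; $\mathrm{OPT}$ is the minimum cost. The PCST instance $(G,r,c,\pi)$ is the same problem without the constraint $|V_F|\ge k$; the rooted $k$-MST instance $(G,r,k,c)$ asks for a subtree containing $r$ with at least $k$ vertices minimizing total edge cost. Procedure 1 is the Goemans–Williamson primal-dual algorithm for PCST, which returns a subtree $F=(V_F,E_F)$ containing $r$ whose PCST cost is at most $2$ times the optimal PCST value. Procedure 2 is Garg's primal-dual algorithm for rooted $k$-MST, which returns a subtree containing $r$ with at least $k$ vertices whose edge cost is at most $2$ times the optimal rooted $k$-MST value. Algorithm $\mathcal{A}$: Step 1: apply Procedure 1 to $(G,r,c,\pi)$ obtaining $F_{\mathrm{PCST}}=(V_{\mathrm{PCST}},E_{\mathrm{PCST}})$;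 if $|V_{\mathrm{PCST}}|\ge k$, return $F_{\mathrm{PCST}}$; otherwise go to Step 2. Step 2: apply Procedure 2 to $(G,r,k,c)$ obtaining $F_{k\text{-MST}}=(V_{k\text{-MST}},E_{k\text{-MST}})$. Step 3: form the graph $G'=(V_{\mathrm{PCST}}\cup V_{k\text{-MST}},E_{\mathrm{PCST}}\cup E_{k\text{-MST}})$, compute a minimum spanning tree $F_{\mathrm{OUT}}$ of $G'$ with respect to $c$, and return it (termination at Step 3). *)

theory Defs
  imports Complex_Main
begin

definition is_graph :: "'a set \<Rightarrow> 'a set set \<Rightarrow> bool" where
  "is_graph V E \<longleftrightarrow> finite V \<and> (\<forall>e\<in>E. \<exists>u v. e = {u, v} \<and> u \<noteq> v \<and> u \<in> V \<and> v \<in> V)"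

definition adj :: "'a set set \<Rightarrow> 'a \<Rightarrow> 'a \<Rightarrow> bool" where
  "adj E u v \<longleftrightarrow> u \<noteq> v \<and> {u, v} \<in> E"

definition connected_graph :: "'a set \<Rightarrow> 'a set set \<Rightarrow> bool" where
  "connected_graph V E \<longleftrightarrow> is_graph V E \<and> V \<noteq> {} \<and>
     (\<forall>u\<in>V. \<forall>v\<in>V. (adj E)\<^sup>*\<^sup>* u v)"

text \<open>A tree: a connected graph which becomes disconnected upon removing any edge
  (minimally connected, i.e. connected and acyclic).\<close>
definition is_tree :: "'a set \<Rightarrow> 'a set set \<Rightarrow> bool" where
  "is_tree V E \<longleftrightarrow> connected_graph V E \<and> (\<forall>e\<in>E. \<not> connected_graph V (E - {e}))"

definition subtree :: "'a set \<Rightarrow> 'a set set \<Rightarrow> 'a set \<Rightarrow> 'a set set \<Rightarrow> bool" where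
  "subtree V E VF EF \<longleftrightarrow> VF \<subseteq> V \<and> EF \<subseteq> E \<and> is_tree VF EF"

definition kpcst_feasible :: "'a set \<Rightarrow> 'a set set \<Rightarrow> 'a \<Rightarrow> nat \<Rightarrow> 'a set \<Rightarrow> 'a set set \<Rightarrow> bool" where
  "kpcst_feasible V E r k VF EF \<longleftrightarrow> subtree V E VF EF \<and> r \<in> VF \<and> k \<le> card VF"

definition pcst_cost :: "('a set \<Rightarrow> real) \<Rightarrow> ('a \<Rightarrow> real) \<Rightarrow> 'a set \<Rightarrow> 'a set \<Rightarrow> 'a set set \<Rightarrow> real" where
  "pcst_cost c \<pi> V VF EF = (\<Sum>e\<in>EF. c e) + (\<Sum>v\<in>V - VF. \<pi> v)"

definition OPT_kpcst :: "'a set \<Rightarrow> 'a set set \<Rightarrow> 'a \<Rightarrow> nat \<Rightarrow> ('a set \<Rightarrow> real) \<Rightarrow> ('a \<Rightarrow> real) \<Rightarrow> real" where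
  "OPT_kpcst V E r k c \<pi> = Inf {pcst_cost c \<pi> V VF EF | VF EF. kpcst_feasible V E r k VF EF}"

definition OPT_pcst :: "'a set \<Rightarrow> 'a set set \<Rightarrow> 'a \<Rightarrow> ('a set \<Rightarrow> real) \<Rightarrow> ('a \<Rightarrow> real) \<Rightarrow> real" where
  "OPT_pcst V E r c \<pi> = Inf {pcst_cost c \<pi> V VF EF | VF EF. subtree V E VF EF \<and> r \<in> VF}"

definition OPT_kmst :: "'a set \<Rightarrow> 'a set set \<Rightarrow> 'a \<Rightarrow> nat \<Rightarrow> ('a set \<Rightarrow> real) \<Rightarrow> real" where
  "OPT_kmst V E r k c = Inf {(\<Sum>e\<in>EF. c e) | VF EF. kpcst_feasible V E r k VF EF}"

definition is_mst :: "'a set \<Rightarrow> 'a set set \<Rightarrow> ('a set \<Rightarrow> real) \<Rightarrow> 'a set set \<Rightarrow> bool" where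
  "is_mst V' E' c T \<longleftrightarrow> T \<subseteq> E' \<and> is_tree V' T \<and>
     (\<forall>T'. T' \<subseteq> E' \<and> is_tree V' T' \<longrightarrow> (\<Sum>e\<in>T. c e) \<le> (\<Sum>e\<in>T'. c e))"

end

theory Submission
  imports Defs
begin

lemma graph_E_finite:
  assumes "is_graph V E" shows "finite E"
proof -
  have "E \<subseteq> Pow V"
  proof
    fix e assume "e \<in> E"
    then obtain u v where "e = {u, v}" "u \<in> V" "v \<in> V" using assms unfolding is_graph_def by blast
    then show "e \<in> Pow V" by simp
  qed
  moreover have "finite V" using assms unfolding is_graph_def by blast
  then have "finite (Pow V)" by simp
  ultimately show ?thesis by (rule finite_subset)
qed

theorem theorem2:
  fixes V :: "'a set" and E :: "'a set set" and r :: 'a and k :: nat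
    and c :: "'a set \<Rightarrow> real" and \<pi> :: "'a \<Rightarrow> real"
    and V_PCST :: "'a set" and E_PCST :: "'a set set"
    and V_kMST :: "'a set" and E_kMST :: "'a set set"
    and E_OUT :: "'a set set"
  assumes G: "connected_graph V E" and root: "r \<in> V"
    and c_nonneg: "\<forall>e\<in>E. 0 \<le> c e" and pi_nonneg: "\<forall>v\<in>V. 0 \<le> \<pi> v"
    \<comment> \<open>Step 1: output of Procedure 1 (Goemans--Williamson) with its guarantee\<close>
    and P1: "subtree V E V_PCST E_PCST" "r \<in> V_PCST"
       "pcst_cost c \<pi> V V_PCST E_PCST \<le> 2 * OPT_pcst V E r c \<pi>"
    \<comment> \<open>the algorithm does not stop at Step 1\<close>
    and step3: "card V_PCST < k"
    \<comment> \<open>Step 2: output of Procedure 2 (Garg) with its guarantee\<close>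
    and P2: "kpcst_feasible V E r k V_kMST E_kMST"
       "(\<Sum>e\<in>E_kMST. c e) \<le> 2 * OPT_kmst V E r k c"
    \<comment> \<open>Step 3: F_OUT is a minimum spanning tree of G'\<close>
    and OUT: "is_mst (V_PCST \<union> V_kMST) (E_PCST \<union> E_kMST) c E_OUT"
  shows "kpcst_feasible V E r k (V_PCST \<union> V_kMST) E_OUT \<and>
         pcst_cost c \<pi> V (V_PCST \<union> V_kMST) E_OUT \<le> 4 * OPT_kpcst V E r k c \<pi>"
proof -
  have gV: "is_graph V E" using G unfolding connected_graph_def by blast
  have finV: "finite V" using gV unfolding is_graph_def by blast
  have finE: "finite E" using graph_E_finite[OF gV] .
  have sP: "V_PCST \<subseteq> V" "E_PCST \<subseteq> E" using P1(1) unfolding subtree_def by auto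
  have sK: "V_kMST \<subseteq> V" "E_kMST \<subseteq> E" "k \<le> card V_kMST" "r \<in> V_kMST"
    using P2(1) unfolding kpcst_feasible_def subtree_def by auto
  have tO: "E_OUT \<subseteq> E_PCST \<union> E_kMST" "is_tree (V_PCST \<union> V_kMST) E_OUT"
    using OUT unfolding is_mst_def by auto
  have feas: "kpcst_feasible V E r k (V_PCST \<union> V_kMST) E_OUT"
  proof -
    have "finite (V_PCST \<union> V_kMST)" using sP sK finV by (meson finite_subset le_sup_iff)
    then have "card V_kMST \<le> card (V_PCST \<union> V_kMST)" by (simp add: card_mono)
    moreover have "E_OUT \<subseteq> E" using tO(1) sP(2) sK(2) by blast
    moreover have "V_PCST \<union> V_kMST \<subseteq> V" using sP(1) sK(1) by blast
    moreover have "r \<in> V_PCST \<union> V_kMST" using P1(2) by blast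
    ultimately show ?thesis unfolding kpcst_feasible_def subtree_def
      using tO(2) sK(3) by linarith
  qed
  have finEP: "finite E_PCST" "finite E_kMST" using sP(2) sK(2) finE by (auto intro: finite_subset)
  have s1: "(\<Sum>e\<in>E_OUT. c e) \<le> (\<Sum>e\<in>E_PCST \<union> E_kMST. c e)"
    using tO(1) finEP sP sK c_nonneg by (intro sum_mono2) auto
  have s2: "(\<Sum>e\<in>E_PCST \<union> E_kMST. c e) \<le> (\<Sum>e\<in>E_PCST. c e) + (\<Sum>e\<in>E_kMST. c e)"
  proof -
    have "(\<Sum>e\<in>E_PCST \<union> E_kMST. c e) + (\<Sum>e\<in>E_PCST \<inter> E_kMST. c e)
          = (\<Sum>e\<in>E_PCST. c e) + (\<Sum>e\<in>E_kMST. c e)"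
      using finEP by (rule sum.union_inter)
    moreover have "0 \<le> (\<Sum>e\<in>E_PCST \<inter> E_kMST. c e)"
      using sP c_nonneg by (intro sum_nonneg) auto
    ultimately show ?thesis by linarith
  qed
  have s3: "(\<Sum>v\<in>V - (V_PCST \<union> V_kMST). \<pi> v) \<le> (\<Sum>v\<in>V - V_PCST. \<pi> v)"
    using finV pi_nonneg by (intro sum_mono2) auto
  have cost: "pcst_cost c \<pi> V (V_PCST \<union> V_kMST) E_OUT
      \<le> pcst_cost c \<pi> V V_PCST E_PCST + (\<Sum>e\<in>E_kMST. c e)"
    using s1 s2 s3 unfolding pcst_cost_def by linarith
  define K where "K = {pcst_cost c \<pi> V VF EF | VF EF. kpcst_feasible V E r k VF EF}"
  define P where "P = {pcst_cost c \<pi> V VF EF | VF EF. subtree V E VF EF \<and> r \<in> VF}"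
  define M where "M = {(\<Sum>e\<in>EF. c e) | VF EF. kpcst_feasible V E r k VF EF}"
  have Kne: "K \<noteq> {}" using P2(1) unfolding K_def by blast
  have costnn: "0 \<le> pcst_cost c \<pi> V VF EF" if "subtree V E VF EF" for VF EF
  proof -
    have "0 \<le> (\<Sum>e\<in>EF. c e)" using that c_nonneg unfolding subtree_def
      by (intro sum_nonneg) auto
    moreover have "0 \<le> (\<Sum>v\<in>V - VF. \<pi> v)" using pi_nonneg by (intro sum_nonneg) auto
    ultimately show ?thesis unfolding pcst_cost_def by linarith
  qed
  have bP: "bdd_below P"
  proof (rule bdd_belowI[of _ 0])
    fix x assume "x \<in> P"
    then obtain VF EF where "x = pcst_cost c \<pi> V VF EF" "subtree V E VF EF"
      unfolding P_def by blast
    then show "0 \<le> x" using costnn by simp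
  qed
  have bM: "bdd_below M"
  proof (rule bdd_belowI[of _ 0])
    fix x assume "x \<in> M"
    then obtain VF EF where x: "x = (\<Sum>e\<in>EF. c e)" "kpcst_feasible V E r k VF EF"
      unfolding M_def by blast
    then have "EF \<subseteq> E" unfolding kpcst_feasible_def subtree_def by blast
    then show "0 \<le> x" unfolding x(1) using c_nonneg by (intro sum_nonneg) blast
  qed
  have o1: "Inf P \<le> Inf K"
  proof (rule cInf_mono[OF Kne bP])
    fix b assume "b \<in> K"
    then obtain VF EF where b: "b = pcst_cost c \<pi> V VF EF" "kpcst_feasible V E r k VF EF"
      unfolding K_def by blast
    then have "b \<in> P" unfolding P_def kpcst_feasible_def by blast
    then show "\<exists>a\<in>P. a \<le> b" by blast
  qed
  have o2: "Inf M \<le> Inf K"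
  proof (rule cInf_mono[OF Kne bM])
    fix b assume "b \<in> K"
    then obtain VF EF where b: "b = pcst_cost c \<pi> V VF EF" "kpcst_feasible V E r k VF EF"
      unfolding K_def by blast
    have "0 \<le> (\<Sum>v\<in>V - VF. \<pi> v)" using pi_nonneg by (intro sum_nonneg) auto
    then have "(\<Sum>e\<in>EF. c e) \<le> b" unfolding b pcst_cost_def by linarith
    moreover have "(\<Sum>e\<in>EF. c e) \<in> M" using b(2) unfolding M_def by blast
    ultimately show "\<exists>a\<in>M. a \<le> b" by blast
  qed
  have "OPT_pcst V E r c \<pi> \<le> OPT_kpcst V E r k c \<pi>"
    using o1 unfolding OPT_pcst_def OPT_kpcst_def P_def K_def .
  moreover have "OPT_kmst V E r k c \<le> OPT_kpcst V E r k c \<pi>"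
    using o2 unfolding OPT_kmst_def OPT_kpcst_def M_def K_def .
  ultimately have "pcst_cost c \<pi> V (V_PCST \<union> V_kMST) E_OUT \<le> 4 * OPT_kpcst V E r k c \<pi>"
    using cost P1(3) P2(2) by linarith
  with feas show ?thesis by blast
qed

end
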